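(* Let $G$ be a group, let $a,b\in G$, and let $K$ be a finite-index normal subgroup of $G$. Let $m=\deg_K(a)$ and $n=\deg_K(b)$. Suppose there exists a retraction $\rho:K\to\langle a^m\rangle$ (that is, a homomorphism $\rho:K\to\langle a^m\rangle$ restricting to the identity on $\langle a^m\rangle$) with the property that \[ \rho\big((b^{mn})^g\big)\neq a^{mn} \] for all $g\in G$. Then there exists a homomorphism $\tau$ from $G$ to a finite group such that $\tau(a)$ is not conjugate to $\tau(b)$.
   Context: For a finite-index subgroup $K$ of $G$ and $g\in G$, the degree $\deg_K(g)$ is the minimal positive integer $n$ such that $g^n\in K$. For group elements $g,h$, the notation $g^h$ means $h^{-1}gh$. *)

theory Defs
  imports "HOL-Algebra.Algebra"
begin

definition deg_in :: "('a, 'b) monoid_scheme \<Rightarrow> 'a set \<Rightarrow> 'a \<Rightarrow> nat" where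
  "deg_in G K g = (LEAST n::nat. 0 < n \<and> g [^]\<^bsub>G\<^esub> n \<in> K)"

end

theory Submission imports Defs begin

lemma finite_image_factor:
  assumes "finite (F ` A)" and "\<And>x y. x \<in> A \<Longrightarrow> y \<in> A \<Longrightarrow> F x = F y \<Longrightarrow> E x = E y"
  shows "finite (E ` A)"
proof -
  have "E ` A \<subseteq> (\<lambda>p. E (SOME x. x \<in> A \<and> F x = p)) ` (F ` A)"
  proof
    fix e assume "e \<in> E ` A"
    then obtain x where x: "x \<in> A" "e = E x" by blast
    have "\<exists>y. y \<in> A \<and> F y = F x" using x by blast
    then have "(SOME y. y \<in> A \<and> F y = F x) \<in> A \<and> F (SOME y. y \<in> A \<and> F y = F x) = F x"
      by (rule someI_ex)
    then have "E (SOME y. y \<in> A \<and> F y = F x) = E x" using assms(2) x by blast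
    then show "e \<in> (\<lambda>p. E (SOME x. x \<in> A \<and> F x = p)) ` (F ` A)" using x by force
  qed
  then show ?thesis using assms(1) finite_subset by blast
qed

context group begin

lemma cancel_aux [simp]:
  "g \<in> carrier G \<Longrightarrow> y \<in> carrier G \<Longrightarrow> g \<otimes> (inv g \<otimes> y) = y"
  "g \<in> carrier G \<Longrightarrow> y \<in> carrier G \<Longrightarrow> inv g \<otimes> (g \<otimes> y) = y"
  by (simp_all add: m_assoc[symmetric])

lemma conj_pow:
  assumes "g \<in> carrier G" "x \<in> carrier G"
  shows "(inv g \<otimes> x \<otimes> g) [^] (k::nat) = inv g \<otimes> x [^] k \<otimes> g"
proof (induction k)
  case 0
  then show ?case using assms by simp
next
  case (Suc k)
  have "(inv g \<otimes> x \<otimes> g) [^] Suc k = (inv g \<otimes> x [^] k \<otimes> g) \<otimes> (inv g \<otimes> x \<otimes> g)"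
    using Suc by simp
  also have "\<dots> = inv g \<otimes> x [^] k \<otimes> (g \<otimes> inv g) \<otimes> x \<otimes> g"
    using assms by (simp add: m_assoc)
  also have "\<dots> = inv g \<otimes> (x [^] k \<otimes> x) \<otimes> g"
    using assms by (simp add: m_assoc)
  finally show ?case by simp
qed

lemma deg_in_props:
  assumes "K \<lhd> G" "finite (rcosets K)" "a \<in> carrier G"
  shows "0 < deg_in G K a \<and> a [^] deg_in G K a \<in> K"
proof -
  interpret N: normal K G by fact
  interpret Q: group "G Mod K" by (rule N.factorgroup_is_group)
  have fin: "finite (carrier (G Mod K))" using assms(2) by (simp add: FactGroup_def)
  have aQ: "K #> a \<in> carrier (G Mod K)" using assms(3) by (simp add: FactGroup_def rcosetsI N.subset)
  define k0 where "k0 = Q.ord (K #> a)"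
  have k01: "k0 \<ge> 1" unfolding k0_def by (rule Q.ord_ge_1[OF fin aQ])
  have "(K #> a) [^]\<^bsub>G Mod K\<^esub> k0 = K" unfolding k0_def using aQ by simp
  moreover have "(K #> a) [^]\<^bsub>G Mod K\<^esub> k0 = K #> (a [^] k0)"
    using hom_nat_pow[OF N.r_coset_hom_Mod assms(3) is_group N.factorgroup_is_group] by simp
  ultimately have "K #> (a [^] k0) = K" by simp
  then have "a [^] k0 \<in> K" using coset_join1 assms(3) N.subgroup_axioms by blast
  then have ex: "0 < k0 \<and> a [^] k0 \<in> K" using k01 by simp
  show ?thesis unfolding deg_in_def by (rule LeastI[of _ k0], rule ex)
qed

lemma int_pow_inj_ord0:
  assumes "c \<in> carrier G" "ord c = 0" "c [^] (i::int) = c [^] (j::int)"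
  shows "i = j"
proof -
  have "c [^] (i - j) = \<one>" using assms by (simp add: int_pow_diff)
  then have "int (ord c) dvd (i - j)" using int_pow_eq_id[OF assms(1)] by simp
  then show ?thesis using assms(2) by simp
qed

lemma choose_N:
  assumes c: "c \<in> carrier G" and fD: "finite D" and DC: "D \<subseteq> generate G {c}" and one: "\<one> \<notin> D"
  shows "\<exists>N::nat. 0 < N \<and> (\<forall>d\<in>D. d \<notin> generate G {c [^] N})"
proof (cases "ord c = 0")
  case False
  have "generate G {c [^] ord c} = {\<one>}"
    using generate_pow[of "\<one>"] c by simp
  then show ?thesis using False one by (intro exI[of _ "ord c"]) auto
next
  case True
  have "\<forall>d\<in>D. \<exists>z::int. d = c [^] z" using DC generate_pow[OF c] by blast
  then obtain zf where zf: "\<And>d. d \<in> D \<Longrightarrow> d = c [^] (zf d :: int)" by metis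
  define N where "N = Suc (\<Sum>d\<in>D. nat \<bar>zf d\<bar>)"
  have "\<forall>d\<in>D. d \<notin> generate G {c [^] N}"
  proof (intro ballI notI)
    fix d assume dD: "d \<in> D" and dg: "d \<in> generate G {c [^] N}"
    obtain w :: int where "d = (c [^] N) [^] w"
      using dg generate_pow[of "c [^] N"] c by auto
    also have "\<dots> = c [^] (int N * w)"
      using c by (simp add: int_pow_int[symmetric] int_pow_pow)
    finally have "c [^] zf d = c [^] (int N * w)" using zf[OF dD] by simp
    then have eq: "zf d = int N * w" using int_pow_inj_ord0[OF c True] by blast
    have "zf d \<noteq> 0" using zf[OF dD] one dD by force
    then have "w \<noteq> 0" using eq by auto
    then have "\<bar>zf d\<bar> \<ge> int N" proof -
      have "\<bar>w\<bar> \<ge> 1" using \<open>w \<noteq> 0\<close> by linarith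
      then have "int N * 1 \<le> int N * \<bar>w\<bar>" by (intro mult_left_mono) auto
      then show ?thesis using eq by (simp add: abs_mult)
    qed
    moreover have "nat \<bar>zf d\<bar> \<le> (\<Sum>d\<in>D. nat \<bar>zf d\<bar>)"
      using fD dD by (intro member_le_sum) auto
    ultimately show False unfolding N_def by linarith
  qed
  then show ?thesis unfolding N_def by blast
qed

lemma rho_props:
  assumes K: "subgroup K G" and C: "subgroup C G"
    and rho: "\<rho> \<in> hom (G\<lparr>carrier := K\<rparr>) (G\<lparr>carrier := C\<rparr>)"
    and id: "\<forall>x\<in>C. \<rho> x = x"
  shows "\<And>x. x \<in> K \<Longrightarrow> \<rho> x \<in> C"
    and "\<And>x y. x \<in> K \<Longrightarrow> y \<in> K \<Longrightarrow> \<rho> (x \<otimes> y) = \<rho> x \<otimes> \<rho> y"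
    and "\<And>x. x \<in> K \<Longrightarrow> \<rho> (inv x) = inv (\<rho> x)"
proof -
  show cl: "\<And>x. x \<in> K \<Longrightarrow> \<rho> x \<in> C" using rho by (auto simp: hom_def)
  show ml: "\<And>x y. x \<in> K \<Longrightarrow> y \<in> K \<Longrightarrow> \<rho> (x \<otimes> y) = \<rho> x \<otimes> \<rho> y"
    using rho by (auto simp: hom_def)
  fix x assume x: "x \<in> K"
  have ix: "inv x \<in> K" using K x by (simp add: subgroup.m_inv_closed)
  have "\<rho> (inv x) \<otimes> \<rho> x = \<rho> (inv x \<otimes> x)" using ml[OF ix x] by simp
  also have "\<dots> = \<one>" using x K id subgroup.one_closed[OF C] subgroup.mem_carrier[OF K] by simp
  finally have "\<rho> (inv x) \<otimes> \<rho> x = \<one>" .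
  then show "\<rho> (inv x) = inv (\<rho> x)"
    using inv_equality cl[OF x] cl[OF ix] subgroup.mem_carrier[OF C] by metis
qed

lemma rcos_eq_iff:
  assumes "subgroup H G" "x \<in> carrier G" "y \<in> carrier G"
  shows "H #> x = H #> y \<longleftrightarrow> x \<otimes> inv y \<in> H"
proof
  assume "H #> x = H #> y"
  then have "x \<in> H #> y" using rcos_self[OF assms(2,1)] by simp
  then show "x \<otimes> inv y \<in> H" using subgroup.rcos_module_imp[OF assms(1) is_group assms(3)] by blast
next
  assume "x \<otimes> inv y \<in> H"
  then have "x \<in> H #> y" using subgroup.rcos_module_rev[OF assms(1) is_group assms(3,2)] by blast
  then show "H #> x = H #> y" using repr_independence[OF _ assms(3,1)] by simp
qed

lemma rcos_absorb:
  assumes "subgroup H G" "h \<in> H" "y \<in> carrier G"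
  shows "H #> (h \<otimes> y) = H #> y"
  using assms rcos_eq_iff[OF assms(1)] subgroup.mem_carrier[OF assms(1)]
  by (simp add: m_assoc)

lemma preimage_fin:
  assumes K: "subgroup K G" and fK: "finite (rcosets K)" and c: "c \<in> carrier G"
    and rho: "\<rho> \<in> hom (G\<lparr>carrier := K\<rparr>) (G\<lparr>carrier := generate G {c}\<rparr>)"
    and id: "\<forall>x\<in>generate G {c}. \<rho> x = x"
    and N: "0 < N"
  shows "subgroup {k\<in>K. \<rho> k \<in> generate G {c [^] (N::nat)}} G"
    and "finite (rcosets {k\<in>K. \<rho> k \<in> generate G {c [^] (N::nat)}})"
proof -
  define C where "C = generate G {c}"
  define DN where "DN = generate G {c [^] N}"
  define L where "L = {k\<in>K. \<rho> k \<in> DN}"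
  have C: "subgroup C G" unfolding C_def using c by (intro generate_is_subgroup) auto
  have DN: "subgroup DN G" unfolding DN_def using c by (intro generate_is_subgroup) auto
  note rp = rho_props[OF K C rho[folded C_def] id[folded C_def]]
  have Ksub: "\<And>x. x \<in> K \<Longrightarrow> x \<in> carrier G" by (rule subgroup.mem_carrier[OF K])
  have Csub: "\<And>x. x \<in> C \<Longrightarrow> x \<in> carrier G" by (rule subgroup.mem_carrier[OF C])
  have DNsub: "\<And>x. x \<in> DN \<Longrightarrow> x \<in> carrier G" by (rule subgroup.mem_carrier[OF DN])
  show L: "subgroup {k\<in>K. \<rho> k \<in> generate G {c [^] N}} G"
    unfolding DN_def[symmetric]
  proof (rule subgroupI)
    show "{k \<in> K. \<rho> k \<in> DN} \<subseteq> carrier G" using Ksub by blast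
    have "\<rho> \<one> = \<one>" using id subgroup.one_closed[OF C] unfolding C_def by blast
    then have "\<one> \<in> {k \<in> K. \<rho> k \<in> DN}"
      using subgroup.one_closed[OF K] subgroup.one_closed[OF DN] by simp
    then show "{k \<in> K. \<rho> k \<in> DN} \<noteq> {}" by blast
    fix a b assume a: "a \<in> {k \<in> K. \<rho> k \<in> DN}" and b: "b \<in> {k \<in> K. \<rho> k \<in> DN}"
    have aK: "a \<in> K" and aD: "\<rho> a \<in> DN" using a by auto
    have bK: "b \<in> K" and bD: "\<rho> b \<in> DN" using b by auto
    have "inv a \<in> K" using subgroup.m_inv_closed[OF K aK] .
    moreover have "\<rho> (inv a) \<in> DN" using rp(3)[OF aK] subgroup.m_inv_closed[OF DN aD] by simp
    ultimately show "inv a \<in> {k \<in> K. \<rho> k \<in> DN}" by simp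
    have "a \<otimes> b \<in> K" using subgroup.m_closed[OF K aK bK] .
    moreover have "\<rho> (a \<otimes> b) \<in> DN" using rp(2)[OF aK bK] subgroup.m_closed[OF DN aD bD] by simp
    ultimately show "a \<otimes> b \<in> {k \<in> K. \<rho> k \<in> DN}" by simp
  qed
  define r where "r g = (SOME h. h \<in> K #> g)" for g
  have r: "r g \<in> K #> g \<and> r g \<in> carrier G \<and> g \<otimes> inv (r g) \<in> K" if g: "g \<in> carrier G" for g
  proof -
    have "r g \<in> K #> g" unfolding r_def using rcos_self[OF g K] by (rule someI)
    moreover have rc: "r g \<in> carrier G"
      using calculation subgroup.elemrcos_carrier[OF K is_group g] by blast
    moreover have "r g \<otimes> inv g \<in> K"
      using calculation subgroup.rcos_module_imp[OF K is_group g] by blast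
    then have "inv (r g \<otimes> inv g) \<in> K" using subgroup.m_inv_closed[OF K] by blast
    then have "g \<otimes> inv (r g) \<in> K" using g rc by (simp add: inv_mult_group)
    ultimately show ?thesis by blast
  qed
  define F where "F g = (K #> g, DN #> \<rho> (g \<otimes> inv (r g)))" for g
  have "F ` carrier G \<subseteq> (rcosets K) \<times> ((\<lambda>i. DN #> c [^] i) ` {..<N})"
  proof
    fix p assume "p \<in> F ` carrier G"
    then obtain g where g: "g \<in> carrier G" "p = F g" by blast
    have Kg: "K #> g \<in> rcosets K" using g rcosetsI subgroup.subset[OF K] by blast
    have "\<rho> (g \<otimes> inv (r g)) \<in> C" using rp(1) r[OF g(1)] by blast
    then obtain z :: int where z: "\<rho> (g \<otimes> inv (r g)) = c [^] z"
      using generate_pow[OF c] unfolding C_def by blast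
    have zz: "z = int N * (z div int N) + z mod int N" by simp
    have "c [^] z = c [^] (int N * (z div int N)) \<otimes> c [^] (z mod int N)"
      by (subst zz, rule int_pow_mult[OF c])
    also have "c [^] (int N * (z div int N)) = (c [^] N) [^] (z div int N)"
      using c by (simp add: int_pow_int[symmetric] int_pow_pow)
    finally have e: "c [^] z = (c [^] N) [^] (z div int N) \<otimes> c [^] (z mod int N)" .
    have inD: "(c [^] N) [^] (z div int N) \<in> DN"
      unfolding DN_def using generate_pow[of "c [^] N"] c by auto
    have "DN #> c [^] z = DN #> c [^] (z mod int N)"
      using e rcos_absorb[OF DN inD] c by simp
    also have "c [^] (z mod int N) = c [^] (nat (z mod int N))"
      using N by (simp add: int_pow_int[symmetric])
    finally have "DN #> \<rho> (g \<otimes> inv (r g)) \<in> (\<lambda>i. DN #> c [^] i) ` {..<N}"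
      using z N by (intro image_eqI[of _ _ "nat (z mod int N)"]) (auto simp: nat_less_iff)
    then show "p \<in> (rcosets K) \<times> ((\<lambda>i. DN #> c [^] i) ` {..<N})"
      using g Kg unfolding F_def by simp
  qed
  then have fF: "finite (F ` carrier G)" using fK finite_subset by blast
  have "finite ((\<lambda>g. L #> g) ` carrier G)"
  proof (rule finite_image_factor[OF fF])
    fix x y assume x: "x \<in> carrier G" and y: "y \<in> carrier G" and Fe: "F x = F y"
    then have Ke: "K #> x = K #> y" and De: "DN #> \<rho> (x \<otimes> inv (r x)) = DN #> \<rho> (y \<otimes> inv (r y))"
      unfolding F_def by auto
    have rr: "r x = r y" unfolding r_def using Ke by simp
    define s where "s = r y"
    have s: "s \<in> carrier G" "x \<otimes> inv s \<in> K" "y \<otimes> inv s \<in> K"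
      using r[OF x] r[OF y] rr unfolding s_def by auto
    have "\<rho> (x \<otimes> inv s) \<otimes> inv (\<rho> (y \<otimes> inv s)) \<in> DN"
      using De rr rcos_eq_iff[OF DN] rp(1)[OF s(2)] rp(1)[OF s(3)] Csub unfolding s_def by metis
    also have "\<rho> (x \<otimes> inv s) \<otimes> inv (\<rho> (y \<otimes> inv s)) = \<rho> ((x \<otimes> inv s) \<otimes> inv (y \<otimes> inv s))"
      using rp(2) rp(3) s subgroup.m_inv_closed[OF K] by simp
    also have "(x \<otimes> inv s) \<otimes> inv (y \<otimes> inv s) = x \<otimes> inv y"
      using x y s by (simp add: inv_mult_group m_assoc)
    finally have d1: "\<rho> (x \<otimes> inv y) \<in> DN" .
    have d2: "x \<otimes> inv y \<in> K" using Ke rcos_eq_iff[OF K x y] by simp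
    have "x \<otimes> inv y \<in> L" using d1 d2 unfolding L_def by simp
    then show "L #> x = L #> y" using rcos_eq_iff[OF L[folded DN_def, folded L_def] x y] by simp
  qed
  then show "finite (rcosets {k\<in>K. \<rho> k \<in> generate G {c [^] (N::nat)}})"
    unfolding L_def DN_def RCOSETS_def by (simp add: UNION_singleton_eq_range)
qed

lemma core_fin:
  assumes L: "subgroup L G" and fL: "finite (rcosets L)"
  shows "{g \<in> carrier G. \<forall>h\<in>carrier G. inv h \<otimes> g \<otimes> h \<in> L} \<lhd> G"
    and "finite (rcosets {g \<in> carrier G. \<forall>h\<in>carrier G. inv h \<otimes> g \<otimes> h \<in> L})"
    and "{g \<in> carrier G. \<forall>h\<in>carrier G. inv h \<otimes> g \<otimes> h \<in> L} \<subseteq> L"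
proof -
  define M where "M = {g \<in> carrier G. \<forall>h\<in>carrier G. inv h \<otimes> g \<otimes> h \<in> L}"
  have Lsub: "\<And>x. x \<in> L \<Longrightarrow> x \<in> carrier G" by (rule subgroup.mem_carrier[OF L])
  show "M \<subseteq> L"
  proof
    fix g assume "g \<in> M"
    then have "inv \<one> \<otimes> g \<otimes> \<one> \<in> L" "g \<in> carrier G" unfolding M_def by auto
    then show "g \<in> L" by simp
  qed
  have M: "subgroup M G"
  proof (rule subgroupI)
    show "M \<subseteq> carrier G" unfolding M_def by blast
    have "\<one> \<in> M" unfolding M_def using subgroup.one_closed[OF L] by simp
    then show "M \<noteq> {}" by blast
    fix a b assume a: "a \<in> M" and b: "b \<in> M"
    have ac: "a \<in> carrier G" and bc: "b \<in> carrier G" using a b unfolding M_def by auto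
    show "inv a \<in> M" unfolding M_def
    proof (intro CollectI conjI ballI)
      show "inv a \<in> carrier G" using ac by simp
      fix h assume h: "h \<in> carrier G"
      have "inv (inv h \<otimes> a \<otimes> h) \<in> L"
        using a h subgroup.m_inv_closed[OF L] unfolding M_def by blast
      also have "inv (inv h \<otimes> a \<otimes> h) = inv h \<otimes> inv a \<otimes> h"
        using ac h by (simp add: inv_mult_group m_assoc)
      finally show "inv h \<otimes> inv a \<otimes> h \<in> L" .
    qed
    show "a \<otimes> b \<in> M" unfolding M_def
    proof (intro CollectI conjI ballI)
      show "a \<otimes> b \<in> carrier G" using ac bc by simp
      fix h assume h: "h \<in> carrier G"
      have "(inv h \<otimes> a \<otimes> h) \<otimes> (inv h \<otimes> b \<otimes> h) \<in> L"
        using a b h subgroup.m_closed[OF L] unfolding M_def by blast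
      also have "(inv h \<otimes> a \<otimes> h) \<otimes> (inv h \<otimes> b \<otimes> h) = inv h \<otimes> (a \<otimes> b) \<otimes> h"
        using ac bc h by (simp add: m_assoc)
      finally show "inv h \<otimes> (a \<otimes> b) \<otimes> h \<in> L" .
    qed
  qed
  show "M \<lhd> G"
  proof (rule normal_invI[OF M])
    fix x h assume x: "x \<in> carrier G" and h: "h \<in> M"
    have hc: "h \<in> carrier G" using h unfolding M_def by auto
    show "x \<otimes> h \<otimes> inv x \<in> M" unfolding M_def
    proof (intro CollectI conjI ballI)
      show "x \<otimes> h \<otimes> inv x \<in> carrier G" using x hc by simp
      fix y assume y: "y \<in> carrier G"
      have "inv (inv x \<otimes> y) \<otimes> h \<otimes> (inv x \<otimes> y) \<in> L"
        using h x y unfolding M_def by simp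
      also have "inv (inv x \<otimes> y) \<otimes> h \<otimes> (inv x \<otimes> y) = inv y \<otimes> (x \<otimes> h \<otimes> inv x) \<otimes> y"
        using x y hc by (simp add: inv_mult_group m_assoc)
      finally show "inv y \<otimes> (x \<otimes> h \<otimes> inv x) \<otimes> y \<in> L" .
    qed
  qed
  define F where "F g = (\<lambda>R\<in>rcosets L. R #> g)" for g
  have "F ` carrier G \<subseteq> PiE (rcosets L) (\<lambda>_. rcosets L)"
  proof
    fix p assume "p \<in> F ` carrier G"
    then obtain g where g: "g \<in> carrier G" "p = F g" by blast
    have "R #> g \<in> rcosets L" if R: "R \<in> rcosets L" for R
    proof -
      obtain x where x: "x \<in> carrier G" "R = L #> x" using R unfolding RCOSETS_def by blast
      then have "R #> g = L #> (x \<otimes> g)"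
        using coset_mult_assoc subgroup.subset[OF L] g by simp
      then show ?thesis using rcosetsI subgroup.subset[OF L] x g by simp
    qed
    then show "p \<in> PiE (rcosets L) (\<lambda>_. rcosets L)" using g unfolding F_def by auto
  qed
  then have fF: "finite (F ` carrier G)"
    using finite_PiE[of "rcosets L" "\<lambda>_. rcosets L"] fL finite_subset by blast
  have "finite ((\<lambda>g. M #> g) ` carrier G)"
  proof (rule finite_image_factor[OF fF])
    fix x y assume x: "x \<in> carrier G" and y: "y \<in> carrier G" and Fe: "F x = F y"
    have "x \<otimes> inv y \<in> M" unfolding M_def
    proof (intro CollectI conjI ballI)
      show "x \<otimes> inv y \<in> carrier G" using x y by simp
      fix h assume h: "h \<in> carrier G"
      have R: "L #> inv h \<in> rcosets L" using rcosetsI subgroup.subset[OF L] h by simp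
      have "(L #> inv h) #> x = (L #> inv h) #> y"
        using fun_cong[OF Fe, of "L #> inv h"] R unfolding F_def by simp
      then have "L #> (inv h \<otimes> x) = L #> (inv h \<otimes> y)"
        using coset_mult_assoc subgroup.subset[OF L] h x y by simp
      then have "(inv h \<otimes> x) \<otimes> inv (inv h \<otimes> y) \<in> L"
        using rcos_eq_iff[OF L] h x y by simp
      also have "(inv h \<otimes> x) \<otimes> inv (inv h \<otimes> y) = inv h \<otimes> (x \<otimes> inv y) \<otimes> h"
        using x y h by (simp add: inv_mult_group m_assoc)
      finally show "inv h \<otimes> (x \<otimes> inv y) \<otimes> h \<in> L" .
    qed
    then show "M #> x = M #> y" using rcos_eq_iff[OF M x y] by simp
  qed
  then show "finite (rcosets M)"
    unfolding RCOSETS_def by (simp add: UNION_singleton_eq_range)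
qed

lemma conj_alg:
  assumes "k \<in> carrier G" "g \<in> carrier G" "x \<in> carrier G"
  shows "inv (k \<otimes> g) \<otimes> x \<otimes> (k \<otimes> g) = inv (inv g \<otimes> k \<otimes> g) \<otimes> (inv g \<otimes> x \<otimes> g) \<otimes> (inv g \<otimes> k \<otimes> g)"
  using assms by (simp add: inv_mult_group m_assoc)
lemma alg2:
  assumes "g \<in> carrier G" "x \<in> carrier G" "e \<in> carrier G"
  shows "inv (inv g) \<otimes> (x \<otimes> inv (inv g \<otimes> e \<otimes> g)) \<otimes> inv g = (inv (inv g) \<otimes> x \<otimes> inv g) \<otimes> inv e"
  using assms by (simp add: inv_mult_group m_assoc)

lemma gen_comm:
  assumes c: "c \<in> carrier G" and u: "u \<in> generate G {c}" and w: "w \<in> generate G {c}"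
  shows "u \<otimes> w = w \<otimes> u"
proof -
  obtain i :: int where i: "u = c [^] i" using u generate_pow[OF c] by blast
  obtain j :: int where j: "w = c [^] j" using w generate_pow[OF c] by blast
  have "u \<otimes> w = c [^] (i + j)" using i j c by (simp add: int_pow_mult)
  also have "\<dots> = c [^] (j + i)" by (simp add: add.commute)
  also have "\<dots> = w \<otimes> u" using i j c by (simp add: int_pow_mult)
  finally show ?thesis .
qed

lemma subgroup_pow_closed:
  assumes "subgroup H G" "h \<in> H" shows "h [^] (k::nat) \<in> H"
  using subgroup_int_pow_closed[OF assms, of "int k"] by (simp add: int_pow_int)

end


theorem lemma2p1:
  fixes G :: "('a, 'b) monoid_scheme" and K :: "'a set" and a b :: 'a and \<rho> :: "'a \<Rightarrow> 'a"
  assumes "group G"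
    and "a \<in> carrier G" and "b \<in> carrier G"
    and "K \<lhd> G"
    and "finite (rcosets\<^bsub>G\<^esub> K)"
    and "\<rho> \<in> hom (G\<lparr>carrier := K\<rparr>)
                  (G\<lparr>carrier := generate G {a [^]\<^bsub>G\<^esub> deg_in G K a}\<rparr>)"
    and "\<forall>x \<in> generate G {a [^]\<^bsub>G\<^esub> deg_in G K a}. \<rho> x = x"
    and "\<forall>g \<in> carrier G.
           \<rho> (inv\<^bsub>G\<^esub> g \<otimes>\<^bsub>G\<^esub> (b [^]\<^bsub>G\<^esub> (deg_in G K a * deg_in G K b)) \<otimes>\<^bsub>G\<^esub> g)
             \<noteq> a [^]\<^bsub>G\<^esub> (deg_in G K a * deg_in G K b)"
  shows "\<exists>(H :: 'a set monoid) \<tau>. group H \<and> finite (carrier H) \<and> \<tau> \<in> hom G H \<and>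
           \<not> (\<exists>h \<in> carrier H. inv\<^bsub>H\<^esub> h \<otimes>\<^bsub>H\<^esub> \<tau> a \<otimes>\<^bsub>H\<^esub> h = \<tau> b)"
proof -
  interpret G: group G by fact
  note ac = assms(2) and bc = assms(3) and KN = assms(4) and fK = assms(5)
  define m where "m = deg_in G K a"
  define n where "n = deg_in G K b"
  have Ksg: "subgroup K G" using KN by (rule normal_imp_subgroup)
  interpret KN: normal K G by fact
  have Kc: "\<And>x. x \<in> K \<Longrightarrow> x \<in> carrier G" by (rule subgroup.mem_carrier[OF Ksg])
  have ma: "0 < m" "a [^]\<^bsub>G\<^esub> m \<in> K" using G.deg_in_props[OF KN fK ac] unfolding m_def by auto
  have nb: "0 < n" "b [^]\<^bsub>G\<^esub> n \<in> K" using G.deg_in_props[OF KN fK bc] unfolding n_def by auto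
  define c where "c = a [^]\<^bsub>G\<^esub> m"
  have cc: "c \<in> carrier G" unfolding c_def using ac by simp
  define C where "C = generate G {c}"
  have Csg: "subgroup C G" unfolding C_def using cc by (intro G.generate_is_subgroup) auto
  have CK: "C \<subseteq> K" unfolding C_def using ma(2) Ksg c_def by (intro G.generate_subgroup_incl) auto
  have rho: "\<rho> \<in> hom (G\<lparr>carrier := K\<rparr>) (G\<lparr>carrier := C\<rparr>)" using assms(6) unfolding C_def c_def m_def .
  have rid: "\<forall>x\<in>C. \<rho> x = x" using assms(7) unfolding C_def c_def m_def .
  note rp = G.rho_props[OF Ksg Csg rho rid]
  define x where "x = b [^]\<^bsub>G\<^esub> (m * n)"
  have xK: "x \<in> K"
  proof -
    have "x = (b [^]\<^bsub>G\<^esub> n) [^]\<^bsub>G\<^esub> m" unfolding x_def using bc by (simp add: G.nat_pow_pow mult.commute)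
    then show ?thesis using G.subgroup_pow_closed[OF Ksg nb(2)] by simp
  qed
  have xc: "x \<in> carrier G" using Kc[OF xK] .
  define e where "e = c [^]\<^bsub>G\<^esub> n"
  have eam: "e = a [^]\<^bsub>G\<^esub> (m * n)" unfolding e_def c_def using ac by (simp add: G.nat_pow_pow)
  have cC: "c \<in> C" unfolding C_def by (rule generate.incl) simp
  have eC: "e \<in> C" unfolding e_def by (rule G.subgroup_pow_closed[OF Csg cC])
  have ec: "e \<in> carrier G" using eC subgroup.mem_carrier[OF Csg] by blast
  have eK: "e \<in> K" using eC CK by blast
  have conjK: "\<And>g k. g \<in> carrier G \<Longrightarrow> k \<in> K \<Longrightarrow> inv\<^bsub>G\<^esub> g \<otimes>\<^bsub>G\<^esub> k \<otimes>\<^bsub>G\<^esub> g \<in> K"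
  proof -
    fix g k assume "g \<in> carrier G" "k \<in> K"
    then show "inv\<^bsub>G\<^esub> g \<otimes>\<^bsub>G\<^esub> k \<otimes>\<^bsub>G\<^esub> g \<in> K"
      using G.normal_invE(2)[OF KN, of "inv\<^bsub>G\<^esub> g" k] by simp
  qed
  define v where "v g = \<rho> (inv\<^bsub>G\<^esub> g \<otimes>\<^bsub>G\<^esub> x \<otimes>\<^bsub>G\<^esub> g)" for g
  have vC: "\<And>g. g \<in> carrier G \<Longrightarrow> v g \<in> C" unfolding v_def using rp(1) conjK xK by blast
  have vc: "\<And>g. g \<in> carrier G \<Longrightarrow> v g \<in> carrier G" using vC subgroup.mem_carrier[OF Csg] by blast
  define D where "D = (\<lambda>g. v g \<otimes>\<^bsub>G\<^esub> inv\<^bsub>G\<^esub> e) ` carrier G"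
  have vinv: "v g1 = v g2" if g1: "g1 \<in> carrier G" and g2: "g2 \<in> carrier G"
    and eq: "K #>\<^bsub>G\<^esub> g1 = K #>\<^bsub>G\<^esub> g2" for g1 g2
  proof -
    define k where "k = g1 \<otimes>\<^bsub>G\<^esub> inv\<^bsub>G\<^esub> g2"
    have kK: "k \<in> K" unfolding k_def using eq G.rcos_eq_iff[OF Ksg g1 g2] by simp
    have kc: "k \<in> carrier G" using Kc[OF kK] .
    have g1k: "g1 = k \<otimes>\<^bsub>G\<^esub> g2" unfolding k_def using g1 g2 by (simp add: G.m_assoc)
    define k2 where "k2 = inv\<^bsub>G\<^esub> g2 \<otimes>\<^bsub>G\<^esub> k \<otimes>\<^bsub>G\<^esub> g2"
    have k2K: "k2 \<in> K" unfolding k2_def using conjK[OF g2 kK] .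
    have k2c: "k2 \<in> carrier G" using Kc[OF k2K] .
    define y2 where "y2 = inv\<^bsub>G\<^esub> g2 \<otimes>\<^bsub>G\<^esub> x \<otimes>\<^bsub>G\<^esub> g2"
    have y2K: "y2 \<in> K" unfolding y2_def using conjK[OF g2 xK] .
    have y2c: "y2 \<in> carrier G" using Kc[OF y2K] .
    have "inv\<^bsub>G\<^esub> g1 \<otimes>\<^bsub>G\<^esub> x \<otimes>\<^bsub>G\<^esub> g1 = inv\<^bsub>G\<^esub> k2 \<otimes>\<^bsub>G\<^esub> y2 \<otimes>\<^bsub>G\<^esub> k2"
      unfolding g1k k2_def y2_def by (rule G.conj_alg[OF kc g2 xc])
    then have "v g1 = \<rho> (inv\<^bsub>G\<^esub> k2 \<otimes>\<^bsub>G\<^esub> y2 \<otimes>\<^bsub>G\<^esub> k2)" unfolding v_def by simp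
    also have "\<dots> = inv\<^bsub>G\<^esub> (\<rho> k2) \<otimes>\<^bsub>G\<^esub> \<rho> y2 \<otimes>\<^bsub>G\<^esub> \<rho> k2"
      using rp k2K y2K subgroup.m_inv_closed[OF Ksg] subgroup.m_closed[OF Ksg] by simp
    also have "\<dots> = inv\<^bsub>G\<^esub> (\<rho> k2) \<otimes>\<^bsub>G\<^esub> (\<rho> k2 \<otimes>\<^bsub>G\<^esub> \<rho> y2)"
      using G.gen_comm[OF cc, of "\<rho> y2" "\<rho> k2"] rp(1)[OF k2K] rp(1)[OF y2K]
        subgroup.mem_carrier[OF Csg] unfolding C_def by (simp add: G.m_assoc)
    also have "\<dots> = \<rho> y2"
      using rp(1)[OF k2K] rp(1)[OF y2K] subgroup.mem_carrier[OF Csg] by simp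
    finally show ?thesis unfolding v_def y2_def by simp
  qed
  have fD: "finite D"
  proof -
    have "finite ((\<lambda>g. K #>\<^bsub>G\<^esub> g) ` carrier G)"
      using fK unfolding RCOSETS_def by (simp add: UNION_singleton_eq_range)
    then have "finite (v ` carrier G)"
      by (rule finite_image_factor) (use vinv in blast)
    then show ?thesis unfolding D_def
      using finite_imageI[of "v ` carrier G" "\<lambda>u. u \<otimes>\<^bsub>G\<^esub> inv\<^bsub>G\<^esub> e"] by (simp add: image_image)
  qed
  have DC: "D \<subseteq> generate G {c}"
  proof
    fix d assume "d \<in> D"
    then obtain g where g0: "d = v g \<otimes>\<^bsub>G\<^esub> inv\<^bsub>G\<^esub> e" "g \<in> carrier G" unfolding D_def by (rule imageE)
    have g: "g \<in> carrier G" "d = v g \<otimes>\<^bsub>G\<^esub> inv\<^bsub>G\<^esub> e" using g0 by auto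
    have "d \<in> C" unfolding g(2)
      using subgroup.m_closed[OF Csg vC[OF g(1)] subgroup.m_inv_closed[OF Csg eC]] .
    then show "d \<in> generate G {c}" unfolding C_def .
  qed
  have D1: "\<one>\<^bsub>G\<^esub> \<notin> D"
  proof
    assume "\<one>\<^bsub>G\<^esub> \<in> D"
    then obtain g where g0: "\<one>\<^bsub>G\<^esub> = v g \<otimes>\<^bsub>G\<^esub> inv\<^bsub>G\<^esub> e" "g \<in> carrier G" unfolding D_def by (rule imageE)
    have g: "g \<in> carrier G" "v g \<otimes>\<^bsub>G\<^esub> inv\<^bsub>G\<^esub> e = \<one>\<^bsub>G\<^esub>" using g0 by auto
    have "v g = (v g \<otimes>\<^bsub>G\<^esub> inv\<^bsub>G\<^esub> e) \<otimes>\<^bsub>G\<^esub> e"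
      using vc[OF g(1)] ec by (simp add: G.m_assoc)
    then have ve: "v g = e" using g(2) ec by simp
    have "v g \<noteq> e" using assms(8)[rule_format, OF g(1)] unfolding v_def x_def eam m_def n_def .
    then show False using ve by contradiction
  qed
  obtain N :: nat where N: "0 < N" "\<forall>d\<in>D. d \<notin> generate G {c [^]\<^bsub>G\<^esub> N}"
    using G.choose_N[OF cc fD DC D1] by blast
  define DN where "DN = generate G {c [^]\<^bsub>G\<^esub> N}"
  define L where "L = {k\<in>K. \<rho> k \<in> DN}"
  have Lsg: "subgroup L G" and fL: "finite (rcosets\<^bsub>G\<^esub> L)"
    using G.preimage_fin[OF Ksg fK cc assms(6)[folded c_def m_def] assms(7)[folded c_def m_def] N(1)]
    unfolding L_def DN_def by auto
  define M where "M = {g \<in> carrier G. \<forall>h\<in>carrier G. inv\<^bsub>G\<^esub> h \<otimes>\<^bsub>G\<^esub> g \<otimes>\<^bsub>G\<^esub> h \<in> L}"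
  have MN: "M \<lhd> G" and fM: "finite (rcosets\<^bsub>G\<^esub> M)" and MsubL: "M \<subseteq> L"
    using G.core_fin[OF Lsg fL] unfolding M_def by auto
  interpret MN: normal M G by fact
  define \<tau> where "\<tau> = (\<lambda>g. M #>\<^bsub>G\<^esub> g)"
  have Hg: "group (G Mod M)" by (rule MN.factorgroup_is_group)
  have Hf: "finite (carrier (G Mod M))" using fM by (simp add: FactGroup_def)
  have th: "\<tau> \<in> hom G (G Mod M)" unfolding \<tau>_def by (rule MN.r_coset_hom_Mod)
  interpret hom: group_hom G "G Mod M" \<tau>
    using Hg th by (simp add: group_hom_def group_hom_axioms_def G.group_axioms)
  have notconj: "\<not> (\<exists>h \<in> carrier (G Mod M). inv\<^bsub>G Mod M\<^esub> h \<otimes>\<^bsub>G Mod M\<^esub> \<tau> a \<otimes>\<^bsub>G Mod M\<^esub> h = \<tau> b)"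
  proof
    assume "\<exists>h \<in> carrier (G Mod M). inv\<^bsub>G Mod M\<^esub> h \<otimes>\<^bsub>G Mod M\<^esub> \<tau> a \<otimes>\<^bsub>G Mod M\<^esub> h = \<tau> b"
    then obtain h where h: "h \<in> carrier (G Mod M)"
      and heq: "inv\<^bsub>G Mod M\<^esub> h \<otimes>\<^bsub>G Mod M\<^esub> \<tau> a \<otimes>\<^bsub>G Mod M\<^esub> h = \<tau> b" by blast
    obtain g where g: "g \<in> carrier G" "h = \<tau> g" using h unfolding carrier_FactGroup \<tau>_def by blast
    have "\<tau> (inv\<^bsub>G\<^esub> g \<otimes>\<^bsub>G\<^esub> a \<otimes>\<^bsub>G\<^esub> g) = \<tau> b"
      using heq g ac by simp
    then have "\<tau> ((inv\<^bsub>G\<^esub> g \<otimes>\<^bsub>G\<^esub> a \<otimes>\<^bsub>G\<^esub> g) [^]\<^bsub>G\<^esub> (m * n)) = \<tau> (b [^]\<^bsub>G\<^esub> (m * n))"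
      using g ac bc by (simp add: hom.hom_nat_pow)
    then have "M #>\<^bsub>G\<^esub> (inv\<^bsub>G\<^esub> g \<otimes>\<^bsub>G\<^esub> e \<otimes>\<^bsub>G\<^esub> g) = M #>\<^bsub>G\<^esub> x"
      unfolding \<tau>_def x_def eam using G.conj_pow[OF g(1) ac] by simp
    then have lM: "x \<otimes>\<^bsub>G\<^esub> inv\<^bsub>G\<^esub> (inv\<^bsub>G\<^esub> g \<otimes>\<^bsub>G\<^esub> e \<otimes>\<^bsub>G\<^esub> g) \<in> M"
      using G.rcos_eq_iff[OF MN.subgroup_axioms xc, of "inv\<^bsub>G\<^esub> g \<otimes>\<^bsub>G\<^esub> e \<otimes>\<^bsub>G\<^esub> g"] g ec by simp
    define g' where "g' = inv\<^bsub>G\<^esub> g"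
    have g'c: "g' \<in> carrier G" unfolding g'_def using g by simp
    have "inv\<^bsub>G\<^esub> g' \<otimes>\<^bsub>G\<^esub> (x \<otimes>\<^bsub>G\<^esub> inv\<^bsub>G\<^esub> (inv\<^bsub>G\<^esub> g \<otimes>\<^bsub>G\<^esub> e \<otimes>\<^bsub>G\<^esub> g)) \<otimes>\<^bsub>G\<^esub> g' \<in> L"
      using lM g'c unfolding M_def by blast
    also have "inv\<^bsub>G\<^esub> g' \<otimes>\<^bsub>G\<^esub> (x \<otimes>\<^bsub>G\<^esub> inv\<^bsub>G\<^esub> (inv\<^bsub>G\<^esub> g \<otimes>\<^bsub>G\<^esub> e \<otimes>\<^bsub>G\<^esub> g)) \<otimes>\<^bsub>G\<^esub> g'
        = (inv\<^bsub>G\<^esub> g' \<otimes>\<^bsub>G\<^esub> x \<otimes>\<^bsub>G\<^esub> g') \<otimes>\<^bsub>G\<^esub> inv\<^bsub>G\<^esub> e"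
      unfolding g'_def by (rule G.alg2[OF g(1) xc ec])
    finally have inL: "(inv\<^bsub>G\<^esub> g' \<otimes>\<^bsub>G\<^esub> x \<otimes>\<^bsub>G\<^esub> g') \<otimes>\<^bsub>G\<^esub> inv\<^bsub>G\<^esub> e \<in> L" .
    have yK: "inv\<^bsub>G\<^esub> g' \<otimes>\<^bsub>G\<^esub> x \<otimes>\<^bsub>G\<^esub> g' \<in> K" using conjK[OF g'c xK] .
    have "\<rho> ((inv\<^bsub>G\<^esub> g' \<otimes>\<^bsub>G\<^esub> x \<otimes>\<^bsub>G\<^esub> g') \<otimes>\<^bsub>G\<^esub> inv\<^bsub>G\<^esub> e) \<in> DN"
      using inL unfolding L_def by blast
    also have "\<rho> ((inv\<^bsub>G\<^esub> g' \<otimes>\<^bsub>G\<^esub> x \<otimes>\<^bsub>G\<^esub> g') \<otimes>\<^bsub>G\<^esub> inv\<^bsub>G\<^esub> e) = v g' \<otimes>\<^bsub>G\<^esub> inv\<^bsub>G\<^esub> e"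
      using rp(2)[OF yK subgroup.m_inv_closed[OF Ksg eK]] rp(3)[OF eK] rid eC unfolding v_def by simp
    finally have "v g' \<otimes>\<^bsub>G\<^esub> inv\<^bsub>G\<^esub> e \<in> DN" .
    moreover have "v g' \<otimes>\<^bsub>G\<^esub> inv\<^bsub>G\<^esub> e \<in> D" unfolding D_def using g'c by blast
    ultimately show False using N(2) unfolding DN_def by blast
  qed
  show ?thesis using Hg Hf th notconj by blast
qed
end
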